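(* Let $u\in A$ be such that $|\dot u(t)|\neq0$ for almost every $t\in[0,1]$. Then there exists a reparametrisation $v\in A$ of $u$ such that $\mathcal L(v)^2=2\mathcal M(v)$.
   Context: Let $\Omega\subset\mathbb{R}^n$, $p_0,p_1\in\Omega$, and $A=\{u\in H^1([0,1],\Omega): u(0)=p_0,\ u(1)=p_1\}$. Let $V:\Omega\to\mathbb{R}$ be continuous and strictly positive. $\mathcal M(u)=\frac12\int_0^1|\dot u(t)|^2dt\int_0^1V(u(t))\,dt$ and $\mathcal L(u)=\int_0^1|\dot u(t)|\sqrt{V(u(t))}\,dt$. *)

theory Defs
  imports "HOL-Analysis.Analysis"
begin

text \<open>H^1([0,1],Omega): absolutely continuous paths with square-integrable derivative,
  i.e. u(t) = u(0) + integral of g over [0,t] with g in L^2(0,1).\<close>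
definition H1_path :: "'a::euclidean_space set \<Rightarrow> (real \<Rightarrow> 'a) \<Rightarrow> bool" where
  "H1_path \<Omega> u \<longleftrightarrow>
     (\<forall>t\<in>{0..1}. u t \<in> \<Omega>) \<and>
     (\<exists>g. g integrable_on {0..1} \<and> (\<lambda>t. (norm (g t))\<^sup>2) integrable_on {0..1} \<and>
          (\<forall>t\<in>{0..1}. u t = u 0 + integral {0..t} g))"

definition admissible :: "'a::euclidean_space set \<Rightarrow> 'a \<Rightarrow> 'a \<Rightarrow> (real \<Rightarrow> 'a) \<Rightarrow> bool" where
  "admissible \<Omega> p0 p1 u \<longleftrightarrow> H1_path \<Omega> u \<and> u 0 = p0 \<and> u 1 = p1"

text \<open>Derivative of a path (defined almost everywhere for H^1 paths).\<close>
definition dot :: "(real \<Rightarrow> 'a::euclidean_space) \<Rightarrow> real \<Rightarrow> 'a" where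
  "dot u t = vector_derivative u (at t)"

definition Mfun :: "('a::euclidean_space \<Rightarrow> real) \<Rightarrow> (real \<Rightarrow> 'a) \<Rightarrow> real" where
  "Mfun V u = (1/2) * integral {0..1} (\<lambda>t. (norm (dot u t))\<^sup>2) * integral {0..1} (\<lambda>t. V (u t))"

definition Lfun :: "('a::euclidean_space \<Rightarrow> real) \<Rightarrow> (real \<Rightarrow> 'a) \<Rightarrow> real" where
  "Lfun V u = integral {0..1} (\<lambda>t. norm (dot u t) * sqrt (V (u t)))"

definition reparam :: "(real \<Rightarrow> 'a) \<Rightarrow> (real \<Rightarrow> 'a) \<Rightarrow> bool" where
  "reparam v u \<longleftrightarrow> (\<exists>\<phi>::real \<Rightarrow> real. continuous_on {0..1} \<phi> \<and> strict_mono_on {0..1} \<phi> \<and>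
      \<phi> 0 = 0 \<and> \<phi> 1 = 1 \<and> (\<forall>t\<in>{0..1}. v t = u (\<phi> t)))"

end

theory Submission
  imports Defs "HOL-Probability.Distribution_Functions"
begin

lemma LDT:
  fixes f :: "real \<Rightarrow> 'b::euclidean_space"
  assumes fi: "f integrable_on {0..1}"
  obtains N where "negligible N"
    "\<And>x. x \<in> {0<..<1} \<Longrightarrow> x \<notin> N \<Longrightarrow> ((\<lambda>t. integral {0..t} f) has_vector_derivative f x) (at x)"
proof -
  define f0 where "f0 x = (if x \<in> {0..1} then f x else 0)" for x
  have f0U: "f0 integrable_on UNIV"
    unfolding f0_def using integrable_restrict_UNIV fi by blast
  have f0c: "f0 integrable_on cbox a b" for a b
    using integrable_on_subinterval[OF f0U, of a b] by simp
  obtain N1 where N1: "negligible N1"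
    "\<And>x e. \<lbrakk>x \<notin> N1; 0 < e\<rbrakk> \<Longrightarrow>
               \<exists>d>0. \<forall>h. 0 < h \<and> h < d \<longrightarrow>
                         norm(integral (cbox x (x + h *\<^sub>R One)) f0 /\<^sub>R h ^ DIM(real) - f0 x) < e"
    using integrable_ccontinuous_explicit[of f0, OF f0c] by blast
  define f1 where "f1 x = f0 (-x)" for x
  have f1c: "f1 integrable_on cbox a b" for a b
  proof -
    have "f0 integrable_on {-b..-a}" using f0c[of "-b" "-a"] by simp
    then have "(\<lambda>x. f0 (-x)) integrable_on {- (-a)..- (-b)}"
      using Henstock_Kurzweil_Integration.integrable_reflect_real[where f=f0 and a="-b" and b="-a"] by simp
    then show ?thesis unfolding f1_def by simp
  qed
  obtain N2 where N2: "negligible N2"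
    "\<And>x e. \<lbrakk>x \<notin> N2; 0 < e\<rbrakk> \<Longrightarrow>
               \<exists>d>0. \<forall>h. 0 < h \<and> h < d \<longrightarrow>
                         norm(integral (cbox x (x + h *\<^sub>R One)) f1 /\<^sub>R h ^ DIM(real) - f1 x) < e"
    using integrable_ccontinuous_explicit[of f1, OF f1c] by blast
  have nN2: "negligible (uminus ` N2)"
    by (rule negligible_differentiable_image_negligible) (auto intro: N2 derivative_intros)
  show ?thesis
  proof (rule that[of "N1 \<union> uminus ` N2"])
    show "negligible (N1 \<union> uminus ` N2)" using N2 nN2 N1 by auto
  next
    fix x :: real assume x: "x \<in> {0<..<1}" "x \<notin> N1 \<union> uminus ` N2"
    have xN1: "x \<notin> N1" and xN2: "-x \<notin> N2" using x by (auto simp: image_iff)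
    have f0x: "f0 x = f x" "f1 (-x) = f x" using x by (auto simp: f0_def f1_def)
    show "((\<lambda>t. integral {0..t} f) has_vector_derivative f x) (at x)"
      unfolding has_vector_derivative_def has_derivative_at_alt
    proof (intro conjI allI impI)
      show "bounded_linear (\<lambda>h. h *\<^sub>R f x)" by (rule bounded_linear_scaleR_left)
      fix e :: real assume e: "e > 0"
      obtain d1 where d1: "d1 > 0" "\<And>h. 0 < h \<Longrightarrow> h < d1 \<Longrightarrow> norm (integral {x..x+h} f0 /\<^sub>R h - f x) < e"
        using N1(2)[OF xN1 e] f0x by auto
      obtain d2 where d2: "d2 > 0" "\<And>h. 0 < h \<Longrightarrow> h < d2 \<Longrightarrow> norm (integral {-x..-x+h} f1 /\<^sub>R h - f x) < e"
        using N2(2)[OF xN2 e] f0x by auto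
      define d where "d = min (min d1 d2) (min x (1 - x))"
      have d: "d > 0" using d1 d2 x by (auto simp: d_def)
      have key: "norm (I - h *\<^sub>R f x) \<le> e * h" if "h > 0" "norm (I /\<^sub>R h - f x) < e" for I h
      proof -
        have "I - h *\<^sub>R f x = h *\<^sub>R (I /\<^sub>R h - f x)" using that by (simp add: algebra_simps)
        then have "norm (I - h *\<^sub>R f x) = h * norm (I /\<^sub>R h - f x)" using that by simp
        then show ?thesis using that by (simp add: mult.commute)
      qed
      show "\<exists>d>0. \<forall>y. norm (y - x) < d \<longrightarrow>
          norm (integral {0..y} f - integral {0..x} f - (y - x) *\<^sub>R f x) \<le> e * norm (y - x)"
      proof (intro exI[of _ d] conjI allI impI d)
        fix y assume y: "norm (y - x) < d"
        consider "y > x" | "y = x" | "y < x" by linarith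
        then show "norm (integral {0..y} f - integral {0..x} f - (y - x) *\<^sub>R f x) \<le> e * norm (y - x)"
        proof cases
          case 1
          have y1: "y < 1" using y d_def x by auto
          have fy: "f integrable_on {0..y}" using integrable_on_subinterval[OF fi, of 0 y] y1 by auto
          have c1: "integral {0..x} f + integral {x..y} f = integral {0..y} f"
            using Henstock_Kurzweil_Integration.integral_combine[OF _ _ fy, of x] x 1 by auto
          have c2: "integral {x..y} f = integral {x..y} f0"
            using x y1 by (intro integral_cong) (auto simp: f0_def)
          have c3: "norm (integral {x..x+(y-x)} f0 /\<^sub>R (y-x) - f x) < e"
            using d1(2)[of "y-x"] 1 y d_def by auto
          have E: "integral {0..y} f - integral {0..x} f = integral {x..y} f0"
            using c1 c2 by (simp add: algebra_simps)
          show ?thesis using key[of "y-x" "integral {x..y} f0"] 1 c3 unfolding E by auto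
        next
          case 2 then show ?thesis by simp
        next
          case 3
          have y0: "y > 0" using y d_def x by auto
          have fx: "f integrable_on {0..x}" using integrable_on_subinterval[OF fi, of 0 x] x by auto
          have c1: "integral {0..y} f + integral {y..x} f = integral {0..x} f"
            using Henstock_Kurzweil_Integration.integral_combine[OF _ _ fx, of y] y0 3 by auto
          have c2: "integral {y..x} f = integral {y..x} f0"
            using x y0 by (intro integral_cong) (auto simp: f0_def)
          have c3: "integral {-x..-x+(x-y)} f1 = integral {y..x} f0"
            using Henstock_Kurzweil_Integration.integral_reflect_real[where f=f0 and b=x and a=y]
            by (simp add: f1_def[abs_def])
          have c4: "norm (integral {-x..-x+(x-y)} f1 /\<^sub>R (x-y) - f x) < e"
            using d2(2)[of "x-y"] 3 y d_def by auto
          have E: "integral {0..x} f - integral {0..y} f = integral {y..x} f0"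
            using c1 c2 by (simp add: algebra_simps)
          have "norm (integral {0..x} f - integral {0..y} f - (x - y) *\<^sub>R f x) \<le> e * (x - y)"
            using key[of "x-y" "integral {y..x} f0"] 3 c4 unfolding E c3 by auto
          moreover have "integral {0..y} f - integral {0..x} f - (y - x) *\<^sub>R f x
               = - (integral {0..x} f - integral {0..y} f - (x - y) *\<^sub>R f x)"
            by (simp add: algebra_simps)
          ultimately show ?thesis using 3 by (simp only: norm_minus_cancel) auto
        qed
      qed
    qed
  qed
qed

lemma dot_ae:
  fixes f :: "real \<Rightarrow> 'b::euclidean_space"
  assumes fi: "f integrable_on {0..1}" and rep: "\<forall>t\<in>{0..1}. y t = c + integral {0..t} f"
  obtains N where "negligible N" "\<And>x. x \<in> {0..1} \<Longrightarrow> x \<notin> N \<Longrightarrow> vector_derivative y (at x) = f x"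
proof -
  obtain N where N: "negligible N"
    "\<And>x. x \<in> {0<..<1} \<Longrightarrow> x \<notin> N \<Longrightarrow> ((\<lambda>t. integral {0..t} f) has_vector_derivative f x) (at x)"
    using LDT[OF fi] by blast
  show ?thesis
  proof (rule that[of "N \<union> {0,1}"])
    show "negligible (N \<union> {0, 1})" using N(1) by auto
  next
    fix x assume x: "x \<in> {0..1}" "x \<notin> N \<union> {0, 1}"
    then have x': "x \<in> {0<..<1}" by auto
    have "((\<lambda>t. c + integral {0..t} f) has_vector_derivative f x) (at x)"
      using N(2)[OF x'] x by (auto intro!: derivative_eq_intros)
    then have "(y has_vector_derivative f x) (at x)"
      by (rule has_vector_derivative_transform_within_open[of _ _ _ "{0<..<1}"]) (use x' rep in auto)
    then show "vector_derivative y (at x) = f x" by (rule vector_derivative_at)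
  qed
qed

lemma borel_version:
  fixes g :: "real \<Rightarrow> 'a::euclidean_space"
  assumes gi: "g integrable_on {0..1}"
  obtains g' where "g' \<in> borel_measurable borel" "negligible {t\<in>{0..1}. g' t \<noteq> g t}"
proof -
  define g0 where "g0 t = (if t \<in> {0..1} then g t else 0)" for t
  have gm0: "g0 \<in> borel_measurable lebesgue"
    unfolding g0_def by (rule borel_measurable_if_I[OF integrable_imp_measurable[OF gi]]) auto
  have ex: "\<exists>G\<in>borel_measurable lborel. AE x in lborel. g0 x \<bullet> b = G x" for b
  proof -
    have "(\<lambda>x. g0 x \<bullet> b) \<in> borel_measurable lebesgue"
      using gm0 by (intro borel_measurable_inner measurable_const) auto
    then show ?thesis by (rule completion_ex_borel_measurable_real)
  qed
  have "\<forall>b. \<exists>G. G \<in> borel_measurable lborel \<and> (AE x in lborel. g0 x \<bullet> b = G x)"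
    using ex by blast
  then obtain G where G0: "\<forall>b. G b \<in> borel_measurable lborel \<and> (AE x in lborel. g0 x \<bullet> b = G b x)"
    by (rule choice[THEN exE]) 
  have G: "\<And>b. G b \<in> borel_measurable lborel" "\<And>b. AE x in lborel. g0 x \<bullet> b = G b x"
    using G0 by auto
  define g' where "g' x = (\<Sum>b\<in>Basis. G b x *\<^sub>R b)" for x
  have gm: "g' \<in> borel_measurable borel"
    unfolding g'_def using G(1) by (auto simp: measurable_lborel2)
  have "AE x in lborel. \<forall>b\<in>Basis. g0 x \<bullet> b = G b x"
    by (rule AE_finite_allI) (auto intro: G(2))
  then have "AE x in lborel. g0 x = g' x"
  proof (rule AE_mp, intro AE_I2 impI)
    fix x assume "\<forall>b\<in>Basis. g0 x \<bullet> b = G b x"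
    then show "g0 x = g' x" unfolding g'_def
      by (metis (no_types, lifting) euclidean_representation sum.cong)
  qed
  then obtain N where N: "{x \<in> space lborel. \<not> g0 x = g' x} \<subseteq> N" "emeasure lborel N = 0" "N \<in> sets lborel"
    by (rule AE_E)
  have "N \<in> null_sets lborel" using N by auto
  then have "N \<in> null_sets lebesgue" by (rule null_sets_completionI)
  then have "negligible N" using negligible_iff_null_sets by blast
  moreover have "{t\<in>{0..1}. g' t \<noteq> g t} \<subseteq> N" using N(1) by (auto simp: g0_def)
  ultimately show ?thesis using that gm negligible_subset by blast
qed

lemma B2L:
  assumes "f \<in> borel_measurable borel"
  shows "f \<in> borel_measurable (lebesgue_on S)"
proof -
  have "f \<in> borel_measurable lborel" using assms by (simp add: measurable_lborel2)
  then have "f \<in> borel_measurable lebesgue" by (rule measurable_completion)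
  then show ?thesis by (rule measurable_restrict_space1)
qed

lemma HK2L:
  fixes f :: "real \<Rightarrow> 'b::euclidean_space"
  assumes fB: "f \<in> borel_measurable borel" and fa: "f absolutely_integrable_on {a..b}"
  shows "integral {a..b} f = (LINT x|lborel. indicator {a..b} x *\<^sub>R f x)"
proof -
  have m: "(\<lambda>x. indicator {a..b} x *\<^sub>R f x) \<in> borel_measurable lborel"
    using fB by (simp add: measurable_lborel2)
  have "integrable lebesgue (\<lambda>x. indicator {a..b} x *\<^sub>R f x)"
    using fa by (simp add: set_integrable_def)
  then have "integrable lborel (\<lambda>x. indicator {a..b} x *\<^sub>R f x)"
    using integrable_completion[OF m] by simp
  then have "set_integrable lborel {a..b} f" by (simp add: set_integrable_def)
  from set_borel_integral_eq_integral(2)[OF this] show ?thesis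
    by (simp add: set_lebesgue_integral_def)
qed

lemma pos_integral:
  fixes f :: "real \<Rightarrow> real"
  assumes fi: "f integrable_on {0..1}" and ab: "0 \<le> a" "a < b" "b \<le> 1"
    and nn: "\<And>x. x \<in> {0..1} \<Longrightarrow> 0 \<le> f x"
    and Z: "negligible Z" and pos: "\<And>x. x \<in> {0..1} - Z \<Longrightarrow> f x > 0"
  shows "integral {a..b} f > 0"
proof (rule ccontr)
  assume "\<not> integral {a..b} f > 0"
  moreover have "integral {a..b} f \<ge> 0"
    using ab by (intro integral_nonneg integrable_on_subinterval[OF fi]) (auto intro: nn)
  ultimately have I0: "integral {a..b} f = 0" by linarith
  obtain N where N: "negligible N"
    "\<And>x. x \<in> {0<..<1} \<Longrightarrow> x \<notin> N \<Longrightarrow> ((\<lambda>t. integral {0..t} f) has_vector_derivative f x) (at x)"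
    using LDT[OF fi] by blast
  have fab: "f integrable_on {0..y}" if "y \<le> 1" for y
    using integrable_on_subinterval[OF fi, of 0 y] that by auto
  have const: "integral {0..x} f = integral {0..a} f" if x: "x \<in> {a..b}" for x
  proof -
    have c1: "integral {0..a} f + integral {a..x} f = integral {0..x} f"
      using Henstock_Kurzweil_Integration.integral_combine[OF _ _ fab, of a x] x ab by auto
    have c2: "integral {a..x} f + integral {x..b} f = integral {a..b} f"
      using Henstock_Kurzweil_Integration.integral_combine[OF _ _ integrable_on_subinterval[OF fi], of a x b] x ab by auto
    have "integral {a..x} f \<ge> 0" "integral {x..b} f \<ge> 0"
      using x ab by (auto intro!: integral_nonneg integrable_on_subinterval[OF fi] nn)
    then have "integral {a..x} f = 0" using c2 I0 by linarith
    then show ?thesis using c1 by simp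
  qed
  have "{a<..<b} \<subseteq> N \<union> Z"
  proof
    fix x assume x: "x \<in> {a<..<b}"
    show "x \<in> N \<union> Z"
    proof (rule ccontr)
      assume nx: "x \<notin> N \<union> Z"
      have x01: "x \<in> {0<..<1}" using x ab by auto
      have d1: "((\<lambda>t. integral {0..t} f) has_vector_derivative f x) (at x)" using N(2)[OF x01] nx by auto
      have "((\<lambda>t. integral {0..a} f) has_vector_derivative 0) (at x)" by (rule has_vector_derivative_const)
      then have d2: "((\<lambda>t. integral {0..t} f) has_vector_derivative 0) (at x)"
      proof (rule has_vector_derivative_transform_within_open[of _ _ _ "{a<..<b}"])
        show "open {a<..<b}" by simp
        show "x \<in> {a<..<b}" by (rule x)
        fix y :: real assume "y \<in> {a<..<b}"
        then have "y \<in> {a..b}" by simp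
        then show "integral {0..a} f = integral {0..y} f" using const by metis
      qed
      have "f x = 0" using vector_derivative_unique_at[OF d1 d2] .
      moreover have "f x > 0" using pos[of x] x01 nx by auto
      ultimately show False by simp
    qed
  qed
  moreover have "negligible (N \<union> Z)" using N(1) Z by auto
  ultimately have "negligible {a<..<b}" by (rule negligible_subset[rotated])
  then have nb: "negligible (box a b)" by simp
  have "negligible (box a b \<union> (cbox a b - box a b))"
    using nb negligible_frontier_interval[of a b] by (rule negligible_Un)
  moreover have "cbox a b \<subseteq> box a b \<union> (cbox a b - box a b)" by blast
  ultimately have "negligible (cbox a b)" by (rule negligible_subset)
  then show False using negligible_interval(1)[of a b] ab by simp
qed

lemma adm_borel:
  fixes u :: "real \<Rightarrow> 'a::euclidean_space"
  assumes "admissible \<Omega> p0 p1 u"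
  obtains g where "g \<in> borel_measurable borel" "g integrable_on {0..1}"
    "(\<lambda>t. (norm (g t))\<^sup>2) integrable_on {0..1}" "\<forall>t\<in>{0..1}. u t = p0 + integral {0..t} g"
    "\<forall>t\<in>{0..1}. u t \<in> \<Omega>" "u 0 = p0" "u 1 = p1"
proof -
  obtain g0 where g0: "g0 integrable_on {0..1}" "(\<lambda>t. (norm (g0 t))\<^sup>2) integrable_on {0..1}"
    "\<forall>t\<in>{0..1}. u t = u 0 + integral {0..t} g0" and uO: "\<forall>t\<in>{0..1}. u t \<in> \<Omega>"
    and u01: "u 0 = p0" "u 1 = p1"
    using assms unfolding admissible_def H1_path_def by blast
  obtain g where gB: "g \<in> borel_measurable borel" and Nd: "negligible {t\<in>{0..1}. g t \<noteq> g0 t}"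
    using borel_version[OF g0(1)] by blast
  let ?N = "{t\<in>{0..1}. g t \<noteq> g0 t}"
  have gi: "g integrable_on {0..1}" by (rule integrable_spike[OF g0(1) Nd]) auto
  have g2: "(\<lambda>t. (norm (g t))\<^sup>2) integrable_on {0..1}" by (rule integrable_spike[OF g0(2) Nd]) auto
  have rep: "\<forall>t\<in>{0..1}. u t = p0 + integral {0..t} g"
  proof
    fix t :: real assume t: "t \<in> {0..1}"
    have "integral {0..t} g0 = integral {0..t} g"
      by (rule integral_spike[OF Nd]) (use t in auto)
    then show "u t = p0 + integral {0..t} g" using g0(3) t u01 by auto
  qed
  show ?thesis using that gB gi g2 rep uO u01 by blast
qed

lemma dens_meas:
  fixes f :: "real \<Rightarrow> real"
  assumes fB: "f \<in> borel_measurable borel" and nn: "\<And>r. f r \<ge> 0" and fi: "f integrable_on {0..1}"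
    and A: "A \<in> sets borel" and Ac: "A \<inter> {0..1} = {0..c}" and c: "c \<le> 1"
  shows "emeasure (density lborel (\<lambda>r. ennreal (indicator {0..1} r * f r))) A = ennreal (integral {0..c} f)"
proof -
  have "emeasure (density lborel (\<lambda>r. ennreal (indicator {0..1} r * f r))) A
      = (\<integral>\<^sup>+r\<in>A. ennreal (indicator {0..1} r * f r) \<partial>lborel)"
    by (rule emeasure_density) (use fB A in auto)
  also have "\<dots> = (\<integral>\<^sup>+r. ennreal (f r) * indicator {0..c} r \<partial>lborel)"
  proof (rule nn_integral_cong)
    fix r :: real
    show "ennreal (indicator {0..1} r * f r) * indicator A r = ennreal (f r) * indicator {0..c} r"
      unfolding Ac[symmetric] indicator_inter_arith
      by (cases "r \<in> A"; cases "r \<in> {0..1::real}") simp_all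
  qed
  also have "\<dots> = ennreal (integral {0..c} f)"
  proof (rule nn_integral_has_integral_lebesgue')
    show "(f has_integral integral {0..c} f) {0..c}"
      using integrable_on_subinterval[OF fi, of 0 c] c by (intro integrable_integral) auto
  qed (rule nn)
  finally show ?thesis .
qed

lemma le_1_sq: "(n::real) \<le> 1 + n\<^sup>2"
proof -
  have "0 \<le> (n - 1)\<^sup>2" by simp
  then have "0 \<le> n*n - 2*n + 1" by (simp add: power2_eq_square algebra_simps)
  moreover have "0 \<le> n * n" by simp
  ultimately show ?thesis unfolding power2_eq_square by linarith
qed

theorem lemmaA2:
  fixes \<Omega> :: "'a::euclidean_space set" and p0 p1 :: 'a
    and V :: "'a \<Rightarrow> real" and u :: "real \<Rightarrow> 'a"
  assumes "p0 \<in> \<Omega>" and "p1 \<in> \<Omega>"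
    and "continuous_on \<Omega> V" and "\<forall>x\<in>\<Omega>. V x > 0"
    and "admissible \<Omega> p0 p1 u"
    and "AE t in lborel. t \<in> {0..1} \<longrightarrow> norm (dot u t) \<noteq> 0"
  shows "\<exists>v. admissible \<Omega> p0 p1 v \<and> reparam v u \<and> (Lfun V v)\<^sup>2 = 2 * Mfun V v"
proof -
  obtain g where gB: "g \<in> borel_measurable borel" and gi: "g integrable_on {0..1}"
    and g2: "(\<lambda>t. (norm (g t))\<^sup>2) integrable_on {0..1}"
    and urep: "\<forall>t\<in>{0..1}. u t = p0 + integral {0..t} g"
    and uO: "\<forall>t\<in>{0..1}. u t \<in> \<Omega>" and u0: "u 0 = p0" and u1: "u 1 = p1"
    using adm_borel[OF assms(5)] by blast
  obtain Nu where Nu: "negligible Nu" "\<And>x. x \<in> {0..1} \<Longrightarrow> x \<notin> Nu \<Longrightarrow> dot u x = g x"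
    using dot_ae[OF gi urep] unfolding dot_def by blast
  obtain Nh where Nh: "{x \<in> space lborel. \<not> (x \<in> {0..1} \<longrightarrow> norm (dot u x) \<noteq> 0)} \<subseteq> Nh"
    "emeasure lborel Nh = 0" "Nh \<in> sets lborel"
    using assms(6) by (rule AE_E)
  have "Nh \<in> null_sets lborel" using Nh by auto
  then have "Nh \<in> null_sets lebesgue" by (rule null_sets_completionI)
  then have nNh: "negligible Nh" using negligible_iff_null_sets by blast
  define Z where "Z = Nu \<union> Nh"
  have Zn: "negligible Z" using Nu(1) nNh by (simp add: Z_def)
  have Zg: "g x \<noteq> 0" if "x \<in> {0..1} - Z" for x
  proof -
    have "norm (dot u x) \<noteq> 0" using Nh(1) that by (auto simp: Z_def)
    then show ?thesis using Nu(2)[of x] that by (auto simp: Z_def)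
  qed
  have ucont: "continuous_on {0..1} u"
  proof -
    have "continuous_on {0..1} (\<lambda>t. p0 + integral {0..t} g)"
      by (intro continuous_intros indefinite_integral_continuous_1 gi)
    then show ?thesis using urep by (metis (no_types, lifting) continuous_on_cong)
  qed
  define cl :: "real \<Rightarrow> real" where "cl t = max 0 (min 1 t)" for t
  have cl01: "cl t \<in> {0..1}" for t by (auto simp: cl_def)
  have clid: "t \<in> {0..1} \<Longrightarrow> cl t = t" for t by (auto simp: cl_def)
  have clc: "continuous_on UNIV cl" unfolding cl_def by (intro continuous_intros)
  have clmono: "x \<le> y \<Longrightarrow> cl x \<le> cl y" for x y by (auto simp: cl_def)
  define ub where "ub t = u (cl t)" for t
  have ubc: "continuous_on UNIV ub"
    unfolding ub_def by (rule continuous_on_compose2[OF ucont clc]) (use cl01 in auto)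
  have ubO: "ub t \<in> \<Omega>" for t using uO cl01 by (simp add: ub_def)
  define Vb where "Vb t = V (ub t)" for t
  have Vbc: "continuous_on UNIV Vb"
    unfolding Vb_def by (rule continuous_on_compose2[OF assms(3) ubc]) (use ubO in auto)
  have Vbpos: "Vb t > 0" for t using assms(4) ubO by (simp add: Vb_def)
  have Vbcl: "Vb (cl t) = Vb t" for t by (simp add: Vb_def ub_def clid[OF cl01])
  obtain m where m: "m > 0" "\<And>t. Vb t \<ge> m"
  proof -
    have "\<exists>x\<in>{0..1::real}. \<forall>y\<in>{0..1}. Vb x \<le> Vb y"
      by (rule continuous_attains_inf) (auto intro: continuous_on_subset[OF Vbc])
    then obtain x where x: "x \<in> {0..1}" "\<And>y. y \<in> {0..1} \<Longrightarrow> Vb x \<le> Vb y"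
      by blast
    show ?thesis
    proof (rule that[of "Vb x"])
      show "Vb x > 0" by (rule Vbpos)
      fix t show "Vb x \<le> Vb t" using x(2)[OF cl01[of t]] Vbcl[of t] by simp
    qed
  qed
  define h where "h r = norm (g r) / sqrt (Vb r)" for r
  have VbB: "Vb \<in> borel_measurable borel" by (rule borel_measurable_continuous_onI[OF Vbc])
  have hB: "h \<in> borel_measurable borel" unfolding h_def using gB VbB by measurable
  have hnn: "h r \<ge> 0" for r using Vbpos[of r] by (simp add: h_def)
  have hpos: "h r > 0" if "r \<in> {0..1} - Z" for r
    using Zg[OF that] Vbpos[of r] by (simp add: h_def)
  have g_abs: "g absolutely_integrable_on {0..1}"
  proof (rule measurable_bounded_by_integrable_imp_absolutely_integrable)
    show "g \<in> borel_measurable (lebesgue_on {0..1})" by (rule B2L[OF gB])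
    show "(\<lambda>t. 1 + (norm (g t))\<^sup>2) integrable_on {0..1}" by (intro integrable_add g2) auto
    fix x show "norm (g x) \<le> 1 + (norm (g x))\<^sup>2" by (rule le_1_sq)
  qed auto
  have h_abs: "h absolutely_integrable_on {0..1}"
  proof (rule measurable_bounded_by_integrable_imp_absolutely_integrable)
    show "h \<in> borel_measurable (lebesgue_on {0..1})" by (rule B2L[OF hB])
    have "(\<lambda>t. norm (g t)) integrable_on {0..1}" using g_abs absolutely_integrable_on_def by blast
    then show "(\<lambda>t. norm (g t) / sqrt m) integrable_on {0..1}" by (rule integrable_on_divide)
    fix x
    have "sqrt m \<le> sqrt (Vb x)" using m by simp
    then have "norm (g x) / sqrt (Vb x) \<le> norm (g x) / sqrt m"
      using m Vbpos[of x] by (intro divide_left_mono) auto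
    then show "norm (h x) \<le> norm (g x) / sqrt m" using Vbpos[of x] by (simp add: h_def)
  qed auto
  have hi: "h integrable_on {0..1}" using h_abs absolutely_integrable_on_def by blast
  define K where "K = integral {0..1} h"
  have K: "K > 0" unfolding K_def
    by (rule pos_integral[OF hi _ _ _ _ Zn]) (auto intro: hnn hpos)
  define S where "S x = integral {0..x} h" for x
  have Sc: "continuous_on {0..1} S" unfolding S_def by (rule indefinite_integral_continuous_1[OF hi])
  have Sstrict: "S x < S y" if "0 \<le> x" "x < y" "y \<le> 1" for x y
  proof -
    have "S x + integral {x..y} h = S y" unfolding S_def
      using Henstock_Kurzweil_Integration.integral_combine[of 0 x y h] that
        integrable_on_subinterval[OF hi, of 0 y] by auto
    moreover have "integral {x..y} h > 0"
      by (rule pos_integral[OF hi _ _ _ _ Zn]) (use that in \<open>auto intro: hnn hpos\<close>)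
    ultimately show ?thesis by linarith
  qed
  have Smono: "S x \<le> S y" if "0 \<le> x" "x \<le> y" "y \<le> 1" for x y
    using Sstrict[of x y] that by (cases "x = y") auto
  have S0: "S 0 = 0" by (simp add: S_def)
  have S1: "S 1 = K" by (simp add: S_def K_def)
  define \<sigma> where "\<sigma> r = S (cl r) / K" for r
  have \<sigma>c: "continuous_on UNIV \<sigma>"
    unfolding \<sigma>_def by (intro continuous_intros continuous_on_compose2[OF Sc clc]) (use cl01 K in auto)
  have \<sigma>01: "\<sigma> r \<in> {0..1}" for r
    using Smono[of 0 "cl r"] Smono[of "cl r" 1] cl01[of r] S0 S1 K by (auto simp: \<sigma>_def)
  have \<sigma>strict: "\<sigma> x < \<sigma> y" if "0 \<le> x" "x < y" "y \<le> 1" for x y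
    using Sstrict[OF that] that K clid[of x] clid[of y] by (auto simp: \<sigma>_def divide_strict_right_mono)
  have \<sigma>mono: "\<sigma> x \<le> \<sigma> y" if "x \<le> y" for x y
    using Smono[of "cl x" "cl y"] clmono[OF that] cl01[of x] cl01[of y] K
    by (auto simp: \<sigma>_def divide_right_mono)
  have \<sigma>0: "\<sigma> 0 = 0" using S0 by (simp add: \<sigma>_def cl_def)
  have \<sigma>1: "\<sigma> 1 = 1" using S1 K by (simp add: \<sigma>_def cl_def)
  have \<sigma>le: "x \<in> {0..1} \<Longrightarrow> y \<in> {0..1} \<Longrightarrow> \<sigma> x \<le> \<sigma> y \<longleftrightarrow> x \<le> y" for x y
    using \<sigma>strict[of y x] \<sigma>mono[of x y] by (cases "x \<le> y") auto
  have \<sigma>inj: "inj_on \<sigma> {0..1}"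
    by (rule inj_onI) (metis \<sigma>le order_antisym order_refl)
  have \<sigma>img: "\<sigma> ` {0..1} = {0..1}"
  proof
    show "\<sigma> ` {0..1} \<subseteq> {0..1}" using \<sigma>01 by auto
    show "{0..1} \<subseteq> \<sigma> ` {0..1}"
    proof
      fix y :: real assume y: "y \<in> {0..1}"
      obtain x where "0 \<le> x" "x \<le> 1" "\<sigma> x = y"
        using IVT'[of \<sigma> 0 y 1] y \<sigma>0 \<sigma>1 continuous_on_subset[OF \<sigma>c] by auto
      then show "y \<in> \<sigma> ` {0..1}" by auto
    qed
  qed
  define \<phi>0 where "\<phi>0 = inv_into {0..1} \<sigma>"
  have \<phi>0a: "\<phi>0 y \<in> {0..1}" "\<sigma> (\<phi>0 y) = y" if "y \<in> {0..1}" for y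
  proof -
    have y: "y \<in> \<sigma> ` {0..1}" using that \<sigma>img by simp
    show "\<phi>0 y \<in> {0..1}" unfolding \<phi>0_def by (rule inv_into_into[OF y])
    show "\<sigma> (\<phi>0 y) = y" unfolding \<phi>0_def by (rule f_inv_into_f[OF y])
  qed
  have \<phi>0b: "\<phi>0 (\<sigma> x) = x" if "x \<in> {0..1}" for x
    using inv_into_f_f[OF \<sigma>inj that] by (simp add: \<phi>0_def)
  have \<phi>0c: "continuous_on {0..1} \<phi>0"
  proof -
    have "continuous_on (\<sigma> ` {0..1}) \<phi>0"
      by (rule continuous_on_inv[OF continuous_on_subset[OF \<sigma>c]]) (use \<phi>0b in auto)
    then show ?thesis using \<sigma>img by simp
  qed
  define \<phi> where "\<phi> t = \<phi>0 (cl t)" for t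
  have \<phi>c: "continuous_on UNIV \<phi>"
    unfolding \<phi>_def by (rule continuous_on_compose2[OF \<phi>0c clc]) (use cl01 in auto)
  have \<phi>01: "\<phi> t \<in> {0..1}" for t using \<phi>0a(1)[OF cl01] by (simp add: \<phi>_def)
  have \<sigma>\<phi>: "\<sigma> (\<phi> t) = t" if "t \<in> {0..1}" for t using \<phi>0a(2)[OF that] clid[OF that] by (simp add: \<phi>_def)
  have \<phi>\<sigma>: "\<phi> (\<sigma> r) = r" if "r \<in> {0..1}" for r using \<phi>0b[OF that] clid[OF \<sigma>01[of r]] by (simp add: \<phi>_def)
  have \<phi>0': "\<phi> 0 = 0" using \<phi>\<sigma>[of 0] \<sigma>0 by simp
  have \<phi>1': "\<phi> 1 = 1" using \<phi>\<sigma>[of 1] \<sigma>1 by simp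
  have \<phi>le: "\<sigma> r \<le> t \<longleftrightarrow> r \<le> \<phi> t" if "r \<in> {0..1}" "t \<in> {0..1}" for r t
    using \<sigma>le[OF that(1) \<phi>01[of t]] \<sigma>\<phi>[OF that(2)] by simp
  have \<phi>strict: "strict_mono_on {0..1} \<phi>"
  proof (rule strict_mono_onI)
    fix r s :: real assume rs: "r \<in> {0..1}" "s \<in> {0..1}" "r < s"
    show "\<phi> r < \<phi> s"
    proof (rule ccontr)
      assume "\<not> \<phi> r < \<phi> s"
      then have "\<phi> s \<le> \<phi> r" by simp
      then have "\<sigma> (\<phi> s) \<le> \<sigma> (\<phi> r)" by (rule \<sigma>mono)
      then show False using \<sigma>\<phi> rs by simp
    qed
  qed
  define v where "v t = u (\<phi> t)" for t
  have vub: "v t = ub (\<phi> t)" for t by (simp add: v_def ub_def clid[OF \<phi>01])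
  have Vv: "V (v t) = Vb (\<phi> t)" for t by (simp add: vub Vb_def)
  have reparam: "reparam v u"
    unfolding reparam_def using \<phi>c \<phi>strict \<phi>0' \<phi>1' continuous_on_subset[OF \<phi>c]
    by (auto simp: v_def)
  define b0 :: 'a where "b0 = (SOME b. b \<in> Basis)"
  have nb0: "norm b0 = 1" using SOME_Basis by (simp add: b0_def)
  define e where "e r = (if g r = 0 then b0 else g r /\<^sub>R norm (g r))" for r
  have ne: "norm (e r) = 1" for r using nb0 by (simp add: e_def)
  have ge: "norm (g r) *\<^sub>R e r = g r" for r by (simp add: e_def)
  define w where "w t = (K * sqrt (Vb (\<phi> t))) *\<^sub>R e (\<phi> t)" for t
  have nw: "norm (w t) = K * sqrt (Vb (\<phi> t))" for t
    using K Vbpos[of "\<phi> t"] ne[of "\<phi> t"] by (simp add: w_def)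
  have nw2: "(norm (w t))\<^sup>2 = K\<^sup>2 * Vb (\<phi> t)" for t
    using Vbpos[of "\<phi> t"] by (simp add: nw power_mult_distrib)
  have \<phi>B: "\<phi> \<in> borel_measurable borel" by (rule borel_measurable_continuous_onI[OF \<phi>c])
  have eB: "e \<in> borel_measurable borel" unfolding e_def using gB by measurable
  have Vb\<phi>c: "continuous_on UNIV (\<lambda>t. Vb (\<phi> t))"
    by (rule continuous_on_compose2[OF Vbc \<phi>c]) auto
  have Vb\<phi>B: "(\<lambda>t. Vb (\<phi> t)) \<in> borel_measurable borel" by (rule borel_measurable_continuous_onI[OF Vb\<phi>c])
  have e\<phi>B: "(\<lambda>t. e (\<phi> t)) \<in> borel_measurable borel" by (rule measurable_compose[OF \<phi>B eB])
  have wB: "w \<in> borel_measurable borel"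
    unfolding w_def using Vb\<phi>B e\<phi>B by measurable
  have key: "(h r / K) *\<^sub>R w (\<sigma> r) = g r" if "r \<in> {0..1}" for r
  proof -
    have "w (\<sigma> r) = (K * sqrt (Vb r)) *\<^sub>R e r" using \<phi>\<sigma>[OF that] by (simp add: w_def)
    moreover have "h r / K * (K * sqrt (Vb r)) = norm (g r)"
      using K Vbpos[of r] by (simp add: h_def)
    ultimately show ?thesis using ge[of r] by simp
  qed
  have bndc: "(\<lambda>t. K * sqrt (Vb (\<phi> t))) integrable_on {0..1}"
    by (intro integrable_continuous_real continuous_intros continuous_on_subset[OF Vb\<phi>c]) auto
  have w_abs: "w absolutely_integrable_on {0..1}"
  proof (rule measurable_bounded_by_integrable_imp_absolutely_integrable)
    show "w \<in> borel_measurable (lebesgue_on {0..1})" by (rule B2L[OF wB])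
  qed (use bndc nw in auto)
  have wi: "w integrable_on {0..1}" using w_abs absolutely_integrable_on_def by blast
  have w2i: "(\<lambda>t. (norm (w t))\<^sup>2) integrable_on {0..1}"
  proof -
    have "(\<lambda>t. K\<^sup>2 * Vb (\<phi> t)) integrable_on {0..1}"
      by (intro integrable_continuous_real continuous_intros continuous_on_subset[OF Vb\<phi>c]) auto
    then show ?thesis by (simp add: nw2)
  qed
  define hK where "hK r = h r / K" for r
  have hKB: "hK \<in> borel_measurable borel" unfolding hK_def using hB by measurable
  have hKnn: "hK r \<ge> 0" for r using hnn[of r] K by (simp add: hK_def)
  have hKi: "hK integrable_on {0..1}" unfolding hK_def by (intro integrable_on_divide hi)
  have hKint: "integral {0..c} hK = S c / K" if "c \<le> 1" for c
  proof -
    have "(h has_integral S c) {0..c}" unfolding S_def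
      using integrable_on_subinterval[OF hi, of 0 c] that by (intro integrable_integral) auto
    then have "(hK has_integral S c / K) {0..c}" unfolding hK_def by (rule has_integral_divide)
    then show ?thesis by (rule integral_unique)
  qed
  define \<mu> where "\<mu> = density lborel (\<lambda>r. ennreal (indicator {0..1} r * hK r))"
  define \<nu> where "\<nu> = density lborel (\<lambda>r::real. ennreal (indicator {0..1} r * 1))"
  have one: "(\<lambda>r::real. 1::real) \<in> borel_measurable borel" "(1::real) \<ge> 0" "(\<lambda>r::real. 1::real) integrable_on {0..1}"
    by auto
  have \<mu>A: "emeasure \<mu> A = ennreal (S c / K)" if "A \<in> sets borel" "A \<inter> {0..1} = {0..c}" "c \<le> 1" for A c
    unfolding \<mu>_def using dens_meas[OF hKB hKnn hKi that] hKint[OF that(3)] by simp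
  have \<nu>A: "emeasure \<nu> A = ennreal (integral {0..c} (\<lambda>r. 1))" if "A \<in> sets borel" "A \<inter> {0..1} = {0..c}" "c \<le> 1" for A c
    unfolding \<nu>_def by (rule dens_meas) (use that one in auto)
  have \<sigma>B: "\<sigma> \<in> borel_measurable borel" by (rule borel_measurable_continuous_onI[OF \<sigma>c])
  have sets\<mu>: "sets \<mu> = sets lborel" by (simp add: \<mu>_def)
  have \<sigma>M: "\<sigma> \<in> measurable \<mu> lborel"
    using \<sigma>B by (simp add: measurable_cong_sets[OF sets\<mu> refl] measurable_lborel2)
  have space\<mu>: "space \<mu> = UNIV" by (simp add: \<mu>_def)
  have fin\<mu>: "emeasure \<mu> UNIV = ennreal 1" using \<mu>A[of UNIV 1] S1 K by simp
  have fin\<nu>: "emeasure \<nu> UNIV = ennreal 1" using \<nu>A[of UNIV 1] by simp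
  have meq: "distr \<mu> lborel \<sigma> = \<nu>"
  proof (rule cdf_unique')
    have "emeasure (distr \<mu> lborel \<sigma>) UNIV = ennreal 1"
      using fin\<mu> \<sigma>M by (simp add: emeasure_distr space\<mu>)
    then have "finite_measure (distr \<mu> lborel \<sigma>)" by (intro finite_measureI) simp
    then show "finite_borel_measure (distr \<mu> lborel \<sigma>)"
      unfolding finite_borel_measure_def finite_borel_measure_axioms_def by simp
    have "finite_measure \<nu>" using fin\<nu> by (intro finite_measureI) (simp add: \<nu>_def)
    then show "finite_borel_measure \<nu>"
      unfolding finite_borel_measure_def finite_borel_measure_axioms_def by (simp add: \<nu>_def)
    show "cdf (distr \<mu> lborel \<sigma>) = cdf \<nu>"
    proof
      fix x :: real
      have pre: "\<sigma> -` {..x} \<in> sets borel" using measurable_sets[OF \<sigma>B, of "{..x}"] by simp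
      have "emeasure (distr \<mu> lborel \<sigma>) {..x} = emeasure \<mu> (\<sigma> -` {..x})"
        using \<sigma>M by (simp add: emeasure_distr space\<mu>)
      also have "\<dots> = emeasure \<nu> {..x}"
      proof (cases "x < 0")
        case True
        have "\<not> \<sigma> r \<le> x" for r using \<sigma>01[of r] True by auto
        then have "\<sigma> -` {..x} \<inter> {0..1} = {0..-1}" by auto
        moreover have "{..x} \<inter> {0..1} = {0..-1::real}" using True by auto
        ultimately show ?thesis using \<mu>A[of "\<sigma> -` {..x}" "-1"] \<nu>A[of "{..x}" "-1"] pre
          by (simp add: S_def)
      next
        case False
        show ?thesis
        proof (cases "x \<le> 1")
          case True
          have x01: "x \<in> {0..1}" using True False by auto
          have "\<sigma> -` {..x} \<inter> {0..1} = {0..\<phi> x}" using \<phi>le[OF _ x01] \<phi>01[of x] by auto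
          moreover have "{..x} \<inter> {0..1} = {0..x}" using True False by auto
          moreover have "S (\<phi> x) / K = x" using \<sigma>\<phi>[OF x01] clid[OF \<phi>01[of x]] by (simp add: \<sigma>_def)
          ultimately show ?thesis using \<mu>A[of "\<sigma> -` {..x}" "\<phi> x"] \<nu>A[of "{..x}" x] pre \<phi>01[of x] True False
            by simp
        next
          case c2: False
          have "\<sigma> r \<le> x" for r using \<sigma>01[of r] c2 by auto
          then have "\<sigma> -` {..x} \<inter> {0..1} = {0..1}" by auto
          moreover have "{..x} \<inter> {0..1} = {0..1::real}" using c2 by auto
          ultimately show ?thesis using \<mu>A[of "\<sigma> -` {..x}" 1] \<nu>A[of "{..x}" 1] pre S1 K
            by simp
        qed
      qed
      finally show "cdf (distr \<mu> lborel \<sigma>) x = cdf \<nu> x" by (simp add: cdf_def measure_def)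
    qed
  qed
  have ind: "indicator {0..t} (\<sigma> r) = (indicator {0..\<phi> t} r :: real)" if "r \<in> {0..1}" "t \<in> {0..1}" for r t
  proof -
    have "\<sigma> r \<in> {0..t} \<longleftrightarrow> r \<in> {0..\<phi> t}" using \<phi>le[OF that] \<sigma>01[of r] that by auto
    then show ?thesis by (simp add: indicator_def)
  qed
  have rep: "integral {0..t} w = integral {0..\<phi> t} g" if t: "t \<in> {0..1}" for t
  proof -
    have wt: "w absolutely_integrable_on {0..t}"
      by (rule absolutely_integrable_on_subinterval[OF w_abs]) (use t in auto)
    have gt: "g absolutely_integrable_on {0..\<phi> t}"
      by (rule absolutely_integrable_on_subinterval[OF g_abs]) (use \<phi>01[of t] in auto)
    have FB: "(\<lambda>\<tau>. indicator {0..t} \<tau> *\<^sub>R w \<tau>) \<in> borel_measurable lborel"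
      using wB by (simp add: measurable_lborel2)
    have "integral {0..t} w = (LINT \<tau>|lborel. indicator {0..t} \<tau> *\<^sub>R w \<tau>)"
      by (rule HK2L[OF wB wt])
    also have "\<dots> = (LINT \<tau>|\<nu>. indicator {0..t} \<tau> *\<^sub>R w \<tau>)"
    proof -
      have "(LINT \<tau>|\<nu>. indicator {0..t} \<tau> *\<^sub>R w \<tau>)
          = (LINT \<tau>|lborel. (indicator {0..1} \<tau> * 1) *\<^sub>R (indicator {0..t} \<tau> *\<^sub>R w \<tau>))"
        unfolding \<nu>_def by (rule integral_density) (use FB in auto)
      also have "\<dots> = (LINT \<tau>|lborel. indicator {0..t} \<tau> *\<^sub>R w \<tau>)"
        by (rule Bochner_Integration.integral_cong) (use t in \<open>auto simp: indicator_def\<close>)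
      finally show ?thesis by simp
    qed
    also have "\<dots> = (LINT \<tau>|distr \<mu> lborel \<sigma>. indicator {0..t} \<tau> *\<^sub>R w \<tau>)"
      using meq by simp
    also have "\<dots> = (LINT r|\<mu>. indicator {0..t} (\<sigma> r) *\<^sub>R w (\<sigma> r))"
      by (rule integral_distr[OF \<sigma>M FB])
    also have "\<dots> = (LINT r|lborel. (indicator {0..1} r * hK r) *\<^sub>R (indicator {0..t} (\<sigma> r) *\<^sub>R w (\<sigma> r)))"
      unfolding \<mu>_def
    proof (rule integral_density)
      show "(\<lambda>r. indicator {0..t} (\<sigma> r) *\<^sub>R w (\<sigma> r)) \<in> borel_measurable lborel"
        using measurable_compose[OF \<sigma>B FB[unfolded measurable_lborel2]] by (simp add: measurable_lborel2)
      show "(\<lambda>r. indicator {0..1} r * hK r) \<in> borel_measurable lborel"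
        using hKB by (simp add: measurable_lborel2)
      show "AE r in lborel. 0 \<le> indicator {0..1} r * hK r" using hKnn by simp
    qed
    also have "\<dots> = (LINT r|lborel. indicator {0..\<phi> t} r *\<^sub>R g r)"
    proof (rule Bochner_Integration.integral_cong)
      fix r :: real
      show "(indicator {0..1} r * hK r) *\<^sub>R (indicator {0..t} (\<sigma> r) *\<^sub>R w (\<sigma> r))
          = indicator {0..\<phi> t} r *\<^sub>R g r"
      proof (cases "r \<in> {0..1}")
        case True
        show ?thesis
        proof (cases "r \<in> {0..\<phi> t}")
          case True2: True
          then show ?thesis using ind[OF True t] key[OF True] True by (simp add: hK_def)
        next
          case False2: False
          then show ?thesis using ind[OF True t] by simp
        qed
      next
        case False
        then have "r \<notin> {0..\<phi> t}" using \<phi>01[of t] by auto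
        then show ?thesis using False by simp
      qed
    qed simp
    also have "\<dots> = integral {0..\<phi> t} g" by (rule HK2L[OF gB gt, symmetric])
    finally show ?thesis .
  qed
  have vrep: "\<forall>t\<in>{0..1}. v t = p0 + integral {0..t} w"
  proof
    fix t :: real assume t: "t \<in> {0..1}"
    show "v t = p0 + integral {0..t} w" using urep \<phi>01[of t] rep[OF t] by (simp add: v_def)
  qed
  have v0: "v 0 = p0" using u0 \<phi>0' by (simp add: v_def)
  have v1: "v 1 = p1" using u1 \<phi>1' by (simp add: v_def)
  have adm: "admissible \<Omega> p0 p1 v"
    unfolding admissible_def H1_path_def
  proof (intro conjI)
    show "\<forall>t\<in>{0..1}. v t \<in> \<Omega>" using uO \<phi>01 by (simp add: v_def)
    show "\<exists>g. g integrable_on {0..1} \<and> (\<lambda>t. (norm (g t))\<^sup>2) integrable_on {0..1} \<and>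
          (\<forall>t\<in>{0..1}. v t = v 0 + integral {0..t} g)"
      using wi w2i vrep v0 by auto
  qed (use v0 v1 in auto)
  obtain Nv where Nv: "negligible Nv" "\<And>x. x \<in> {0..1} \<Longrightarrow> x \<notin> Nv \<Longrightarrow> dot v x = w x"
    using dot_ae[OF wi vrep] unfolding dot_def by blast
  define I where "I = integral {0..1} (\<lambda>t. Vb (\<phi> t))"
  have IV: "integral {0..1} (\<lambda>t. V (v t)) = I" by (simp add: Vv I_def)
  have Lv: "Lfun V v = K * I"
  proof -
    have "Lfun V v = integral {0..1} (\<lambda>t. K * Vb (\<phi> t))"
      unfolding Lfun_def
    proof (rule integral_spike[OF Nv(1)])
      fix x assume x: "x \<in> {0..1} - Nv"
      show "K * Vb (\<phi> x) = norm (dot v x) * sqrt (V (v x))"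
        using Nv(2)[of x] x Vbpos[of "\<phi> x"] by (simp add: nw Vv)
    qed
    also have "\<dots> = K * I"
      by (simp add: I_def Henstock_Kurzweil_Integration.integral_mult_right)
    finally show ?thesis .
  qed
  have Mv: "Mfun V v = 1/2 * (K\<^sup>2 * I) * I"
  proof -
    have "integral {0..1} (\<lambda>t. (norm (dot v t))\<^sup>2) = integral {0..1} (\<lambda>t. K\<^sup>2 * Vb (\<phi> t))"
    proof (rule integral_spike[OF Nv(1)])
      fix x assume x: "x \<in> {0..1} - Nv"
      show "K\<^sup>2 * Vb (\<phi> x) = (norm (dot v x))\<^sup>2"
        using Nv(2)[of x] x by (simp add: nw2)
    qed
    also have "\<dots> = K\<^sup>2 * I"
      by (simp add: I_def Henstock_Kurzweil_Integration.integral_mult_right)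
    finally show ?thesis unfolding Mfun_def IV by simp
  qed
  have "(Lfun V v)\<^sup>2 = 2 * Mfun V v"
    unfolding Lv Mv by (simp add: power2_eq_square)
  then show ?thesis using adm reparam by blast
qed

end
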